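(* Let $X$ be a connected metric space, $\mathcal M=\{M_1,\dots,M_n\}\subset\mathcal P^f_{\mathrm{Cl}}(X)$, $\Sigma(\mathcal M)\neq\emptyset$ and $d=(d_1,\dots,d_n)\in\Omega(\mathcal M)$. Then there exists $i$ with $d_i=\sup_{x\in K_d}|x\,M_i|$.
   Context: For a metric space $X$, $p\in X$, $A\subset X$: $|p\,A|=\inf_{a\in A}|p\,a|$ ($=\infty$ if $A=\emptyset$); for $0\le r<\infty$, $B_r(A)=\{p:|p\,A|\le r\}$. For nonempty $A,B$, $d_H(A,B)=\max\{\sup_{a\in A}|a\,B|,\sup_{b\in B}|b\,A|\}\in[0,\infty]$. $\mathcal P_{\mathrm{Cl}}(X)$ is the set of nonempty closed subsets of $X$ with $d_H$. A finiteness class of $\mathcal P_{\mathrm{Cl}}(X)$ is an equivalence class of the relation $A\sim B\iff d_H(A,B)<\infty$; $\mathcal P^f_{\mathrm{Cl}}(X)$ denotes a fixed finiteness class. For finite $\mathcal M=\{M_1,\dots,M_n\}\subset\mathcal P^f_{\mathrm{Cl}}(X)$, set $S_{\mathcal M}(Y)=\sum_{i=1}^n d_H(Y,M_i)$ for $Y\in\mathcal P^f_{\mathrm{Cl}}(X)$; $\Sigma(\mathcal M)$ is the set of all minimizers of $S_{\mathcal M}$ over $\mathcal P^f_{\mathrm{Cl}}(X)$. For $K\in\Sigma(\mathcal M)$, $d(K)=(d_H(K,M_1),\dots,d_H(K,M_n))$; $\Omega(\mathcal M)=\{d(K):K\in\Sigma(\mathcal M)\}$; for $d=(d_1,\dots,d_n)\in\Omega(\mathcal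 M)$, $\Sigma_d(\mathcal M)=\{K\in\Sigma(\mathcal M):d(K)=d\}$, partially ordered by inclusion; and $K_d=\bigcap_{i=1}^n B_{d_i}(M_i)$. *)

theory Defs
  imports "HOL-Analysis.Analysis"
begin

text \<open>Distance from a point to a set, with value \<infinity> for the empty set.\<close>
definition ptdist :: "'a::metric_space \<Rightarrow> 'a set \<Rightarrow> ereal" where
  "ptdist p A = (INF a\<in>A. ereal (dist p a))"

definition nbhd :: "ereal \<Rightarrow> 'a::metric_space set \<Rightarrow> 'a set" where
  "nbhd r A = {p. ptdist p A \<le> r}"

definition hdist :: "'a::metric_space set \<Rightarrow> 'a set \<Rightarrow> ereal" where
  "hdist A B = max (SUP a\<in>A. ptdist a B) (SUP b\<in>B. ptdist b A)"

definition PCl :: "'a::metric_space set set" where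
  "PCl = {A. closed A \<and> A \<noteq> {}}"

definition finiteness_class :: "'a::metric_space set set \<Rightarrow> bool" where
  "finiteness_class F \<longleftrightarrow> (\<exists>A0\<in>PCl. F = {B\<in>PCl. hdist A0 B < \<infinity>})"

definition SM :: "(nat \<Rightarrow> 'a::metric_space set) \<Rightarrow> nat \<Rightarrow> 'a set \<Rightarrow> ereal" where
  "SM M n Y = (\<Sum>i\<in>{1..n}. hdist Y (M i))"

definition Sigma_min :: "'a::metric_space set set \<Rightarrow> (nat \<Rightarrow> 'a set) \<Rightarrow> nat \<Rightarrow> 'a set set" where
  "Sigma_min F M n = {K\<in>F. \<forall>Y\<in>F. SM M n K \<le> SM M n Y}"

text \<open>Omega(M), vectors represented as functions on {1..n} (values outside are irrelevant).\<close>
definition Omega :: "'a::metric_space set set \<Rightarrow> (nat \<Rightarrow> 'a set) \<Rightarrow> nat \<Rightarrow> (nat \<Rightarrow> ereal) set" where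
  "Omega F M n = {d. \<exists>K\<in>Sigma_min F M n. \<forall>i\<in>{1..n}. d i = hdist K (M i)}"

definition Kd :: "(nat \<Rightarrow> 'a::metric_space set) \<Rightarrow> nat \<Rightarrow> (nat \<Rightarrow> ereal) \<Rightarrow> 'a set" where
  "Kd M n d = (\<Inter>i\<in>{1..n}. nbhd (d i) (M i))"

end

theory Submission
  imports Defs
begin

lemma ptdist_eq: "A \<noteq> {} \<Longrightarrow> ptdist x A = ereal (infdist x A)"
  unfolding ptdist_def infdist_notempty
  by (subst ereal_Inf') (auto simp: image_comp)

lemma ptdist_nonneg: "0 \<le> ptdist x A"
  unfolding ptdist_def by (auto intro: INF_greatest)

lemma hdist_nonneg: "A \<noteq> {} \<Longrightarrow> 0 \<le> hdist A B"
proof -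
  assume "A \<noteq> {}"
  then obtain a where a: "a \<in> A" by blast
  have "0 \<le> ptdist a B" by (rule ptdist_nonneg)
  also have "\<dots> \<le> (SUP a\<in>A. ptdist a B)" using a by (rule SUP_upper)
  also have "\<dots> \<le> hdist A B" unfolding hdist_def by simp
  finally show ?thesis .
qed

lemma hdist_sym: "hdist A B = hdist B A"
  unfolding hdist_def by (simp add: max.commute)

lemma hdist_fin_D:
  assumes "A \<noteq> {}" "B \<noteq> {}" "hdist A B < \<infinity>"
  shows "\<exists>r. (\<forall>a\<in>A. infdist a B \<le> r) \<and> (\<forall>b\<in>B. infdist b A \<le> r)"
proof -
  obtain r where r: "hdist A B = ereal r"
    using assms(3) hdist_nonneg[OF assms(1)] by (cases "hdist A B") auto
  have "\<forall>a\<in>A. infdist a B \<le> r"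
  proof
    fix a assume "a \<in> A"
    then have "ptdist a B \<le> hdist A B" unfolding hdist_def
      by (meson SUP_upper max.coboundedI1)
    then show "infdist a B \<le> r" using r ptdist_eq[OF assms(2)] by simp
  qed
  moreover have "\<forall>b\<in>B. infdist b A \<le> r"
  proof
    fix b assume "b \<in> B"
    then have "ptdist b A \<le> hdist A B" unfolding hdist_def
      by (meson SUP_upper max.coboundedI2)
    then show "infdist b A \<le> r" using r ptdist_eq[OF assms(1)] by simp
  qed
  ultimately show ?thesis by blast
qed

lemma hdist_fin_I:
  assumes "A \<noteq> {}" "B \<noteq> {}" "\<forall>a\<in>A. infdist a B \<le> r" "\<forall>b\<in>B. infdist b A \<le> r"
  shows "hdist A B < \<infinity>"
proof -
  have "hdist A B \<le> ereal r" unfolding hdist_def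
    using assms ptdist_eq[OF assms(1)] ptdist_eq[OF assms(2)]
    by (auto intro!: SUP_least)
  moreover have "ereal r < \<infinity>" by simp
  ultimately show ?thesis by (rule order.strict_trans1)
qed

lemma infdist_tri:
  assumes "B \<noteq> {}" "\<forall>b\<in>B. infdist b C \<le> r2"
  shows "infdist a C \<le> infdist a B + r2"
proof -
  have "infdist a C - r2 \<le> (INF b\<in>B. dist a b)"
  proof (rule cINF_greatest)
    show "B \<noteq> {}" by fact
    fix b assume "b \<in> B"
    have "infdist a C \<le> infdist b C + dist a b" by (rule infdist_triangle)
    then show "infdist a C - r2 \<le> dist a b" using assms(2) \<open>b \<in> B\<close> by force
  qed
  then show ?thesis using infdist_notempty[OF assms(1)] by simp
qed

lemma hdist_tri_fin:
  assumes "A \<noteq> {}" "B \<noteq> {}" "C \<noteq> {}" "hdist A B < \<infinity>" "hdist B C < \<infinity>"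
  shows "hdist A C < \<infinity>"
proof -
  obtain r1 where r1: "\<forall>a\<in>A. infdist a B \<le> r1" "\<forall>b\<in>B. infdist b A \<le> r1"
    using hdist_fin_D[OF assms(1,2,4)] by blast
  obtain r2 where r2: "\<forall>b\<in>B. infdist b C \<le> r2" "\<forall>c\<in>C. infdist c B \<le> r2"
    using hdist_fin_D[OF assms(2,3,5)] by blast
  have "\<forall>a\<in>A. infdist a C \<le> r1 + r2"
    using infdist_tri[OF assms(2) r2(1)] r1(1) by (meson add_right_mono order_trans)
  moreover have "\<forall>c\<in>C. infdist c A \<le> r1 + r2"
    using infdist_tri[OF assms(2) r1(2)] r2(2) by (metis add.commute add_right_mono order_trans)
  ultimately show ?thesis
    by (intro hdist_fin_I[OF assms(1,3)]) auto
qed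

theorem mainTheorem20:
  fixes F :: "'a::metric_space set set" and M :: "nat \<Rightarrow> 'a set" and n :: nat
    and d :: "nat \<Rightarrow> ereal"
  assumes "connected (UNIV :: 'a set)"
    and "finiteness_class F"
    and "n \<ge> 1"
    and "\<forall>i\<in>{1..n}. M i \<in> F"
    and "Sigma_min F M n \<noteq> {}"
    and "d \<in> Omega F M n"
  shows "\<exists>i\<in>{1..n}. d i = (SUP x\<in>Kd M n d. ptdist x (M i))"
proof (rule ccontr)
  assume neg: "\<not> ?thesis"
  obtain A0 where A0: "A0 \<in> PCl" "F = {B\<in>PCl. hdist A0 B < \<infinity>}"
    using assms(2) unfolding finiteness_class_def by blast
  obtain K where K: "K \<in> Sigma_min F M n" "\<forall>i\<in>{1..n}. d i = hdist K (M i)"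
    using assms(6) unfolding Omega_def by blast
  have KF: "K \<in> F" and Kmin: "\<forall>Y\<in>F. SM M n K \<le> SM M n Y"
    using K(1) unfolding Sigma_min_def by auto
  have Kne: "K \<noteq> {}" and A0K: "hdist A0 K < \<infinity>" and A0ne: "A0 \<noteq> {}"
    using KF A0 unfolding PCl_def by auto
  have Mne: "M i \<noteq> {}" and A0M: "hdist A0 (M i) < \<infinity>" if "i \<in> {1..n}" for i
    using assms(4) that A0 unfolding PCl_def by auto
  have dfin: "d i < \<infinity>" if "i \<in> {1..n}" for i
  proof -
    have "hdist K A0 < \<infinity>" using A0K hdist_sym by metis
    then show ?thesis using hdist_tri_fin[OF Kne A0ne Mne[OF that] _ A0M[OF that]] K(2) that by simp
  qed
  have dge: "ptdist x (M i) \<le> d i" if "i \<in> {1..n}" "x \<in> K" for i x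
    using K(2) that unfolding hdist_def by (metis SUP_upper max.coboundedI1)
  define r where "r i = real_of_ereal (d i)" for i
  have d_r: "d i = ereal (r i)" if "i \<in> {1..n}" for i
  proof -
    obtain x where "x \<in> K" using Kne by blast
    then have "0 \<le> d i" using dge[OF that] ptdist_nonneg order_trans by blast
    then show ?thesis using dfin[OF that] unfolding r_def by (cases "d i") auto
  qed
  define C where "C = Kd M n d"
  have C_eq: "C = (\<Inter>i\<in>{1..n}. {x. infdist x (M i) \<le> r i})"
    unfolding C_def Kd_def nbhd_def using d_r ptdist_eq[OF Mne] by auto
  have Cclosed: "closed C" unfolding C_eq
    by (intro closed_INT ballI closed_Collect_le continuous_intros)
  have KC: "K \<subseteq> C" unfolding C_def Kd_def nbhd_def using dge by auto
  define t where "t i = (SUP x\<in>C. ptdist x (M i))" for i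
  have tle: "t i \<le> d i" if "i \<in> {1..n}" for i
    unfolding t_def C_def Kd_def nbhd_def using that by (auto intro!: SUP_least)
  have tlt: "t i < d i" if "i \<in> {1..n}" for i
    using neg tle[OF that] that unfolding t_def C_def by (metis order_less_le)
  define U where "U = (\<Inter>i\<in>{1..n}. {x. infdist x (M i) < r i})"
  have Uopen: "open U" unfolding U_def
    by (intro open_INT ballI finite_atLeastAtMost open_Collect_less continuous_intros)
  have "C \<subseteq> U"
  proof
    fix x assume x: "x \<in> C"
    show "x \<in> U" unfolding U_def
    proof
      fix i assume i: "i \<in> {1..n}"
      have "ptdist x (M i) \<le> t i" unfolding t_def using x by (rule SUP_upper)
      then have "ereal (infdist x (M i)) < ereal (r i)"
        using tlt[OF i] d_r[OF i] ptdist_eq[OF Mne[OF i]] order.strict_trans1 by metis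
      then show "x \<in> {x. infdist x (M i) < r i}" by simp
    qed
  qed
  moreover have "U \<subseteq> C" unfolding U_def C_eq by (auto intro: less_imp_le)
  ultimately have "C = U" by auto
  with Uopen have Copen: "open C" by simp
  have "C \<noteq> {}" using KC Kne by auto
  then have CU: "C = UNIV"
    using assms(1) Copen Cclosed unfolding connected_clopen
    by (metis closed_closedin open_openin subtopology_UNIV)
  have hU: "hdist UNIV (M i) = t i" if "i \<in> {1..n}" for i
  proof -
    have "(SUP b\<in>M i. ptdist b UNIV) = 0"
      using Mne[OF that] by (simp add: ptdist_eq)
    moreover have "0 \<le> t i"
    proof -
      obtain x where "x \<in> K" using Kne by blast
      then have "ptdist x (M i) \<le> t i" unfolding t_def using KC by (auto intro: SUP_upper)
      then show ?thesis using ptdist_nonneg order_trans by blast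
    qed
    ultimately show ?thesis unfolding hdist_def t_def CU by simp
  qed
  have t_u: "t i = ereal (real_of_ereal (t i))" if "i \<in> {1..n}" for i
  proof -
    have "0 \<le> t i" using hU[OF that] hdist_nonneg[of UNIV "M i"] by (metis UNIV_not_empty)
    then show ?thesis using tlt[OF that] dfin[OF that] by (cases "t i") auto
  qed
  have "1 \<in> {1..n}" using assms(3) by auto
  have UF: "UNIV \<in> F"
  proof -
    have "hdist A0 UNIV < \<infinity>"
    proof (rule hdist_tri_fin[OF A0ne Mne[OF \<open>1 \<in> {1..n}\<close>]])
      show "hdist A0 (M 1) < \<infinity>" by (rule A0M) fact
      show "hdist (M 1) UNIV < \<infinity>" using hdist_sym hU[OF \<open>1 \<in> {1..n}\<close>]
          tlt[OF \<open>1 \<in> {1..n}\<close>] dfin[OF \<open>1 \<in> {1..n}\<close>] by (metis order.strict_trans)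
    qed auto
    then show ?thesis using A0 unfolding PCl_def by auto
  qed
  have "SM M n UNIV = (\<Sum>i\<in>{1..n}. ereal (real_of_ereal (t i)))"
    unfolding SM_def using hU t_u by (intro sum.cong) auto
  also have "\<dots> = ereal (\<Sum>i\<in>{1..n}. real_of_ereal (t i))" by simp
  also have "\<dots> < ereal (\<Sum>i\<in>{1..n}. r i)"
  proof -
    have "(\<Sum>i\<in>{1..n}. real_of_ereal (t i)) < (\<Sum>i\<in>{1..n}. r i)"
    proof (rule sum_strict_mono)
      show "{1..n} \<noteq> {}" using assms(3) by auto
      fix i assume i: "i \<in> {1..n}"
      show "real_of_ereal (t i) < r i" using tlt[OF i] t_u[OF i] d_r[OF i] by (metis ereal_less(2) less_ereal.simps(1))
    qed auto
    then show ?thesis by simp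
  qed
  also have "\<dots> = SM M n K"
    unfolding SM_def using K(2) d_r by (simp add: sum_ereal[symmetric] del: sum_ereal)
  finally show False using Kmin UF by (meson not_le)
qed

end
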